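(* Let $L$ be a finite modular lattice with exactly two coatoms and $U$ a finite modular lattice with exactly two atoms. Then any vertical 2-sum $L +_2 U$ is a modular lattice.
   Context: Let $L' = L \setminus \{\top_L\}$ and $U' = U \setminus \{\bot_U\}$. A vertical 2-sum $L +_2 U$ is the poset obtained from the disjoint union of $L'$ and $U'$ by identifying the two coatoms of $L$ with the two atoms of $U$ via some bijection; $x \le y$ iff $x,y \in L'$ and $x \le_L y$, or $x,y \in U'$ and $x \le_U y$, or $x \in L'$, $y \in U'$ and there is an identified element $c$ with $x \le_L c$ and $c \le_U y$. (This poset is a lattice.) *)

theory Defs
  imports Main "HOL-Algebra.Lattice"
begin

definition is_modular :: "('a::lattice) itself \<Rightarrow> bool" where
  "is_modular _ \<longleftrightarrow> (\<forall>x y z::'a. x \<le> z \<longrightarrow> sup x (inf y z) = inf (sup x y) z)"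

definition coatoms :: "('a::bounded_lattice) set" where
  "coatoms = {c. c < Orderings.top \<and> \<not> (\<exists>x. c < x \<and> x < Orderings.top)}"

definition atoms :: "('a::bounded_lattice) set" where
  "atoms = {a. Orderings.bot < a \<and> \<not> (\<exists>x. Orderings.bot < x \<and> x < a)}"

(* Vertical 2-sum L +_2 U along a bijection f : coatoms(L) -> atoms(U).
   Elements are represented in 'a + 'b: Inl x for x in L' = L - {top};
   Inr y for y in U' = U - {bot} that is not an atom of U (the atoms of U
   are identified with the coatoms of L and represented by the latter). *)
definition vsum2_carrier :: "(('a::bounded_lattice) + ('b::bounded_lattice)) set" where
  "vsum2_carrier = {Inl x | x. x \<noteq> Orderings.top} \<union> {Inr y | y. y \<noteq> Orderings.bot \<and> y \<notin> atoms}"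

(* embedding of the identified representatives: an L'-element x is viewed
   in U as f x when x is a coatom *)
fun vsum2_le :: "('a::bounded_lattice \<Rightarrow> 'b::bounded_lattice) \<Rightarrow> ('a + 'b) \<Rightarrow> ('a + 'b) \<Rightarrow> bool" where
  "vsum2_le f (Inl x) (Inl x') \<longleftrightarrow> x \<le> x'"
| "vsum2_le f (Inr y) (Inr y') \<longleftrightarrow> y \<le> y'"
| "vsum2_le f (Inl x) (Inr y) \<longleftrightarrow> (\<exists>c\<in>coatoms. x \<le> c \<and> f c \<le> y)"
| "vsum2_le f (Inr y) (Inl x) \<longleftrightarrow> False"

definition vsum2 :: "('a::bounded_lattice \<Rightarrow> 'b::bounded_lattice) \<Rightarrow> ('a + 'b) gorder" where
  "vsum2 f = \<lparr>carrier = vsum2_carrier, eq = (=), le = vsum2_le f\<rparr>"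

definition modular_lattice :: "('c, 'd) gorder_scheme \<Rightarrow> bool" where
  "modular_lattice P \<longleftrightarrow> lattice P \<and>
     (\<forall>x\<in>carrier P. \<forall>y\<in>carrier P. \<forall>z\<in>carrier P.
        x \<sqsubseteq>\<^bsub>P\<^esub> z \<longrightarrow> x \<squnion>\<^bsub>P\<^esub> (y \<sqinter>\<^bsub>P\<^esub> z) = (x \<squnion>\<^bsub>P\<^esub> y) \<sqinter>\<^bsub>P\<^esub> z)"

end

theory Submission
  imports Defs
begin

lemma ball_sum: "(\<forall>z\<in>A. P z) \<longleftrightarrow> (\<forall>a. Inl a \<in> A \<longrightarrow> P (Inl a)) \<and> (\<forall>b. Inr b \<in> A \<longrightarrow> P (Inr b))"
  by (metis sum.exhaust)

lemma lattice_from_ops: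
  fixes P :: "('c, 'd) gorder_scheme"
  assumes po: "partial_order P"
    and J: "\<And>x y. x \<in> carrier P \<Longrightarrow> y \<in> carrier P \<Longrightarrow> J x y \<in> carrier P \<and> x \<sqsubseteq>\<^bsub>P\<^esub> J x y \<and> y \<sqsubseteq>\<^bsub>P\<^esub> J x y
        \<and> (\<forall>z\<in>carrier P. x \<sqsubseteq>\<^bsub>P\<^esub> z \<and> y \<sqsubseteq>\<^bsub>P\<^esub> z \<longrightarrow> J x y \<sqsubseteq>\<^bsub>P\<^esub> z)"
    and M: "\<And>x y. x \<in> carrier P \<Longrightarrow> y \<in> carrier P \<Longrightarrow> M x y \<in> carrier P \<and> M x y \<sqsubseteq>\<^bsub>P\<^esub> x \<and> M x y \<sqsubseteq>\<^bsub>P\<^esub> y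
        \<and> (\<forall>z\<in>carrier P. z \<sqsubseteq>\<^bsub>P\<^esub> x \<and> z \<sqsubseteq>\<^bsub>P\<^esub> y \<longrightarrow> z \<sqsubseteq>\<^bsub>P\<^esub> M x y)"
  shows "lattice P"
    and "\<And>x y. x \<in> carrier P \<Longrightarrow> y \<in> carrier P \<Longrightarrow> x \<squnion>\<^bsub>P\<^esub> y = J x y"
    and "\<And>x y. x \<in> carrier P \<Longrightarrow> y \<in> carrier P \<Longrightarrow> x \<sqinter>\<^bsub>P\<^esub> y = M x y"
proof -
  interpret partial_order P by (rule po)
  have lJ: "least P (J x y) (Upper P {x, y})" if "x \<in> carrier P" "y \<in> carrier P" for x y
    using J[OF that] that unfolding least_def Upper_def by auto
  have gM: "greatest P (M x y) (Lower P {x, y})" if "x \<in> carrier P" "y \<in> carrier P" for x y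
    using M[OF that] that unfolding greatest_def Lower_def by auto
  show "lattice P"
    by unfold_locales (use lJ gM in blast)+
  show "x \<squnion>\<^bsub>P\<^esub> y = J x y" if "x \<in> carrier P" "y \<in> carrier P" for x y
    unfolding join_def sup_def
    by (rule some_equality) (use lJ[OF that] least_unique in blast)+
  show "x \<sqinter>\<^bsub>P\<^esub> y = M x y" if "x \<in> carrier P" "y \<in> carrier P" for x y
    unfolding meet_def inf_def
    by (rule some_equality) (use gM[OF that] greatest_unique in blast)+
qed


locale V2 =
  fixes f :: "'a::{finite, bounded_lattice} \<Rightarrow> 'b::{finite, bounded_lattice}"
    and c1 c2 :: 'a
  assumes modL: "\<And>x y z :: 'a. x \<le> z \<Longrightarrow> sup x (inf y z) = inf (sup x y) z"
    and modU: "\<And>x y z :: 'b. x \<le> z \<Longrightarrow> sup x (inf y z) = inf (sup x y) z"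
    and coat: "(coatoms :: 'a set) = {c1, c2}"
    and c12: "c1 \<noteq> c2"
    and at: "(atoms :: 'b set) = {f c1, f c2}"
    and a12: "f c1 \<noteq> f c2"
begin

abbreviation "a1 \<equiv> f c1"
abbreviation "a2 \<equiv> f c2"
abbreviation "a12 \<equiv> sup a1 a2"

lemma coat_mem: "c \<in> {c1, c2} \<longleftrightarrow> c < Orderings.top \<and> \<not> (\<exists>x. c < x \<and> x < Orderings.top)"
  using coat unfolding coatoms_def by blast

lemma atom_mem: "a \<in> {a1, a2} \<longleftrightarrow> Orderings.bot < a \<and> \<not> (\<exists>x. Orderings.bot < x \<and> x < a)"
  using at unfolding atoms_def by blast

lemma ci: "c1 < Orderings.top" "c2 < Orderings.top"
  "c1 < x \<Longrightarrow> x = Orderings.top" "c2 < x \<Longrightarrow> x = Orderings.top"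
  using coat_mem[of c1] coat_mem[of c2] top.not_eq_extremum by auto

lemma ai: "Orderings.bot < a1" "Orderings.bot < a2"
  "x < a1 \<Longrightarrow> x = Orderings.bot" "x < a2 \<Longrightarrow> x = Orderings.bot"
  using atom_mem[of a1] atom_mem[of a2] bot.not_eq_extremum by auto

lemma below_coat: "x \<noteq> Orderings.top \<Longrightarrow> x \<le> c1 \<or> x \<le> c2"
proof -
  assume x: "x \<noteq> Orderings.top"
  let ?A = "{z. x \<le> z \<and> z \<noteq> Orderings.top}"
  have fA: "finite ?A" by (rule finite)
  have xA: "x \<in> ?A" using x by simp
  obtain m where m: "m \<in> ?A" "x \<le> m" "\<forall>b\<in>?A. m \<le> b \<longrightarrow> m = b"
    using finite_has_maximal2[OF fA xA] by blast
  have "m \<in> {c1, c2}"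
    unfolding coat_mem
  proof safe
    show "m < Orderings.top" using m(1) by (simp add: less_le)
  next
    fix z assume "m < z" "z < Orderings.top"
    have "x \<le> z" using m(2) \<open>m < z\<close> by (meson order_trans less_imp_le)
    then have "z \<in> ?A" using \<open>z < Orderings.top\<close> by simp
    then have "m = z" using m(3) \<open>m < z\<close> less_imp_le by blast
    then show False using \<open>m < z\<close> by simp
  qed
  then show ?thesis using m(2) by auto
qed

lemma above_atom: "y \<noteq> Orderings.bot \<Longrightarrow> a1 \<le> y \<or> a2 \<le> y"
proof -
  assume y: "y \<noteq> Orderings.bot"
  let ?A = "{z. z \<le> y \<and> z \<noteq> Orderings.bot}"
  have fA: "finite ?A" by (rule finite)
  have xA: "y \<in> ?A" using y by simp
  obtain m where m: "m \<in> ?A" "m \<le> y" "\<forall>b\<in>?A. b \<le> m \<longrightarrow> m = b"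
    using finite_has_minimal2[OF fA xA] by blast
  have "m \<in> {a1, a2}"
    unfolding atom_mem
  proof safe
    show "Orderings.bot < m" using m(1) by (simp add: bot_less)
  next
    fix z assume "Orderings.bot < z" "z < m"
    have "z \<le> y" using m(2) \<open>z < m\<close> by (meson order_trans less_imp_le)
    then have "z \<in> ?A" using \<open>Orderings.bot < z\<close> by simp
    then have "m = z" using m(3) \<open>z < m\<close> less_imp_le by blast
    then show False using \<open>z < m\<close> by simp
  qed
  then show ?thesis using m(2) by auto
qed

lemma c_incomp: "\<not> c1 \<le> c2" "\<not> c2 \<le> c1"
  using ci c12 by (metis order.strict_iff_order top.extremum_strict)+

lemma coat_join1: "\<not> p \<le> c1 \<Longrightarrow> sup p c1 = Orderings.top"
proof -
  assume "\<not> p \<le> c1"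
  then have "c1 < sup p c1" by (simp add: order.strict_iff_order sup.absorb_iff2 sup_commute)
  then show ?thesis by (rule ci(3))
qed

lemma coat_join2: "\<not> p \<le> c2 \<Longrightarrow> sup p c2 = Orderings.top"
proof -
  assume "\<not> p \<le> c2"
  then have "c2 < sup p c2" by (simp add: order.strict_iff_order sup.absorb_iff2 sup_commute)
  then show ?thesis by (rule ci(4))
qed

lemma c_join: "sup c1 c2 = Orderings.top" "sup c2 c1 = Orderings.top"
  using coat_join1 coat_join2 c_incomp by blast+

lemma a_incomp: "\<not> a1 \<le> a2" "\<not> a2 \<le> a1"
  using ai a12 by (metis order.strict_iff_order bot.extremum_strict)+

lemma atom_meet1: "\<not> a1 \<le> y \<Longrightarrow> inf a1 y = Orderings.bot"
proof -
  assume "\<not> a1 \<le> y"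
  then have "inf a1 y < a1" by (metis inf.cobounded1 inf.cobounded2 order_less_le)
  then show ?thesis by (rule ai(3))
qed

lemma atom_meet2: "\<not> a2 \<le> y \<Longrightarrow> inf a2 y = Orderings.bot"
proof -
  assume "\<not> a2 \<le> y"
  then have "inf a2 y < a2" by (metis inf.cobounded1 inf.cobounded2 order_less_le)
  then show ?thesis by (rule ai(4))
qed

definition inU :: "'b \<Rightarrow> bool" where
  "inU y \<longleftrightarrow> y \<noteq> Orderings.bot \<and> y \<noteq> a1 \<and> y \<noteq> a2"

lemma inU_up: "inU y \<Longrightarrow> y \<le> z \<Longrightarrow> inU z"
proof -
  assume y: "inU y" and yz: "y \<le> z"
  have "z \<noteq> Orderings.bot" using y yz unfolding inU_def by (auto simp: bot_unique)
  moreover have "z \<noteq> a1"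
  proof
    assume "z = a1" then have "y < a1" using y yz unfolding inU_def by (simp add: order.strict_iff_order)
    then show False using ai(3) y unfolding inU_def by blast
  qed
  moreover have "z \<noteq> a2"
  proof
    assume "z = a2" then have "y < a2" using y yz unfolding inU_def by (simp add: order.strict_iff_order)
    then show False using ai(4) y unfolding inU_def by blast
  qed
  ultimately show ?thesis unfolding inU_def by blast
qed

lemma inU_ge1: "a1 \<le> y \<Longrightarrow> y \<noteq> a1 \<Longrightarrow> inU y"
  unfolding inU_def using ai a_incomp by auto

lemma inU_ge2: "a2 \<le> y \<Longrightarrow> y \<noteq> a2 \<Longrightarrow> inU y"
  unfolding inU_def using ai a_incomp by auto

lemma inU_a12: "inU (sup a1 a2)"
  using inU_ge1[of "sup a1 a2"] a_incomp by (metis sup.orderE sup_ge2 sup_ge1)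

lemma inU_nb: "inU y \<Longrightarrow> y \<noteq> Orderings.bot" unfolding inU_def by simp

lemma inU_both: "a1 \<le> y \<Longrightarrow> a2 \<le> y \<Longrightarrow> inU y"
  using inU_ge1 a_incomp by blast

definition ell :: "'b \<Rightarrow> 'a" where
  "ell y = (if a1 \<le> y \<and> a2 \<le> y then Orderings.top else if a1 \<le> y then c1 else c2)"

lemma le_mixed: "vsum2_le f (Inl x) (Inr y) \<longleftrightarrow> (a1 \<le> y \<and> x \<le> c1) \<or> (a2 \<le> y \<and> x \<le> c2)"
  using coat by auto

lemma le_mixed_ell: "x \<noteq> Orderings.top \<Longrightarrow> y \<noteq> Orderings.bot \<Longrightarrow>
    vsum2_le f (Inl x) (Inr y) \<longleftrightarrow> x \<le> ell y"
  unfolding le_mixed ell_def using below_coat above_atom by auto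

lemma carrier_iff: "Inl x \<in> vsum2_carrier \<longleftrightarrow> x \<noteq> Orderings.top"
  "Inr y \<in> vsum2_carrier \<longleftrightarrow> inU y"
  unfolding vsum2_carrier_def inU_def using at by auto

lemma ell_top: "ell y = Orderings.top \<longleftrightarrow> a1 \<le> y \<and> a2 \<le> y"
  unfolding ell_def using ci by auto

lemma ell_simps: "a1 \<le> y \<Longrightarrow> a2 \<le> y \<Longrightarrow> ell y = Orderings.top"
  "a1 \<le> y \<Longrightarrow> \<not> a2 \<le> y \<Longrightarrow> ell y = c1"
  "\<not> a1 \<le> y \<Longrightarrow> ell y = c2"
  unfolding ell_def by auto

lemma ell_a12: "ell (sup a1 a2) = Orderings.top"
  by (simp add: ell_simps)

lemma ell_big: "ell (sup v (sup a1 a2)) = Orderings.top"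
  by (rule ell_simps) (simp_all add: le_supI2)

lemma ell_mono: "y \<noteq> Orderings.bot \<Longrightarrow> y \<le> w \<Longrightarrow> ell y \<le> ell w"
  unfolding ell_def using above_atom[of y] c_incomp by (auto dest: order_trans)

lemma ell_eq: "y \<noteq> Orderings.bot \<Longrightarrow> y \<le> w \<Longrightarrow> ell w \<noteq> Orderings.top \<Longrightarrow> ell w = ell y"
  unfolding ell_def using above_atom[of y] c_incomp by (auto dest: order_trans split: if_splits)

lemma ell_inf: "inf y y' \<noteq> Orderings.bot \<Longrightarrow> ell (inf y y') = inf (ell y) (ell y')"
  using above_atom[of "inf y y'"] unfolding ell_def by (auto simp: inf_absorb1 inf_absorb2)

lemma coat_join_ell: "\<not> p \<le> ell v \<Longrightarrow> sup p (ell v) = Orderings.top"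
  unfolding ell_def using coat_join1 coat_join2 by auto

lemma ell_ne_top_nb: "y \<noteq> Orderings.bot \<Longrightarrow> ell y \<noteq> Orderings.top \<Longrightarrow> ell y = c1 \<or> ell y = c2"
  unfolding ell_def by auto

lemma po: "partial_order (vsum2 f)"
proof -
  have tr: "vsum2_le f x z" if "vsum2_le f x y" "vsum2_le f y z" for x y z
    using that by (cases x; cases y; cases z) (auto simp: le_mixed intro: order_trans)
  have as: "x = y" if "vsum2_le f x y" "vsum2_le f y x" for x y
    using that by (cases x; cases y) auto
  have rf: "vsum2_le f x x" for x by (cases x) auto
  show ?thesis
    unfolding vsum2_def
    by unfold_locales (auto intro: tr as rf)
qed

fun J :: "'a + 'b \<Rightarrow> 'a + 'b \<Rightarrow> 'a + 'b" where
  "J (Inl x) (Inl x') = (if sup x x' = Orderings.top then Inr (sup a1 a2) else Inl (sup x x'))"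
| "J (Inr y) (Inr y') = Inr (sup y y')"
| "J (Inl x) (Inr y) = (if x \<le> ell y then Inr y else Inr (sup y (sup a1 a2)))"
| "J (Inr y) (Inl x) = (if x \<le> ell y then Inr y else Inr (sup y (sup a1 a2)))"

fun M :: "'a + 'b \<Rightarrow> 'a + 'b \<Rightarrow> 'a + 'b" where
  "M (Inl x) (Inl x') = Inl (inf x x')"
| "M (Inl x) (Inr y) = Inl (inf x (ell y))"
| "M (Inr y) (Inl x) = Inl (inf x (ell y))"
| "M (Inr y) (Inr y') = (if inU (inf y y') then Inr (inf y y') else Inl (inf (ell y) (ell y')))"

lemma le_LR: "x \<noteq> Orderings.top \<Longrightarrow> inU y \<Longrightarrow> vsum2_le f (Inl x) (Inr y) \<longleftrightarrow> x \<le> ell y"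
  using le_mixed_ell inU_nb by blast

declare vsum2_le.simps(3)[simp del]

lemma J_lub: "x \<in> vsum2_carrier \<Longrightarrow> y \<in> vsum2_carrier \<Longrightarrow> J x y \<in> vsum2_carrier \<and>
   vsum2_le f x (J x y) \<and> vsum2_le f y (J x y) \<and>
   (\<forall>z\<in>vsum2_carrier. vsum2_le f x z \<and> vsum2_le f y z \<longrightarrow> vsum2_le f (J x y) z)"
proof (cases x; cases y)
  fix p q assume xy: "x = Inl p" "y = Inl q" and c: "x \<in> vsum2_carrier" "y \<in> vsum2_carrier"
  then have p: "p \<noteq> Orderings.top" and q: "q \<noteq> Orderings.top" by (auto simp: carrier_iff)
  show ?thesis
  proof (cases "sup p q = Orderings.top")
    case True
    have "\<forall>z\<in>vsum2_carrier. vsum2_le f x z \<and> vsum2_le f y z \<longrightarrow> vsum2_le f (J x y) z"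
    proof (intro ballI impI)
      fix z assume z: "z \<in> vsum2_carrier" "vsum2_le f x z \<and> vsum2_le f y z"
      show "vsum2_le f (J x y) z"
      proof (cases z)
        case (Inl w) then show ?thesis using z xy True by (auto simp: carrier_iff) (metis le_sup_iff top_unique)
      next
        case (Inr w)
        then have "p \<le> ell w" "q \<le> ell w" "inU w" using z xy p q by (auto simp: carrier_iff le_LR)
        then have "ell w = Orderings.top" using True by (metis le_sup_iff top_unique)
        then show ?thesis using xy True Inr by (auto simp: ell_top)
      qed
    qed
    then show ?thesis using xy True p q inU_a12 by (auto simp: carrier_iff le_LR ell_a12)
  next
    case False
    then show ?thesis using xy p q
      by (auto simp: carrier_iff le_LR ball_sum)
  qed
next
  fix p v assume xy: "x = Inl p" "y = Inr v" and c: "x \<in> vsum2_carrier" "y \<in> vsum2_carrier"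
  then have p: "p \<noteq> Orderings.top" and v: "inU v" by (auto simp: carrier_iff)
  have vb: "v \<noteq> Orderings.bot" using v inU_nb by blast
  show ?thesis
  proof (cases "p \<le> ell v")
    case True
    then show ?thesis using xy p v by (auto simp: carrier_iff le_LR ball_sum)
  next
    case False
    have inw: "inU (sup v (sup a1 a2))" by (rule inU_both) (simp_all add: le_supI2)
    have "\<forall>z\<in>vsum2_carrier. vsum2_le f x z \<and> vsum2_le f y z \<longrightarrow> vsum2_le f (J x y) z"
    proof (intro ballI impI)
      fix z assume z: "z \<in> vsum2_carrier" "vsum2_le f x z \<and> vsum2_le f y z"
      show "vsum2_le f (J x y) z"
      proof (cases z)
        case (Inl w) then show ?thesis using z xy by auto
      next
        case (Inr w)
        then have "p \<le> ell w" "v \<le> w" "inU w" using z xy p by (auto simp: carrier_iff le_LR)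
        moreover have "ell w = Orderings.top"
          using ell_eq[OF vb \<open>v \<le> w\<close>] \<open>p \<le> ell w\<close> False by metis
        ultimately show ?thesis using xy False Inr by (auto simp: ell_top)
      qed
    qed
    then show ?thesis using xy False p v inw by (auto simp: carrier_iff le_LR ell_big)
  qed
next
  fix v p assume xy: "x = Inr v" "y = Inl p" and c: "x \<in> vsum2_carrier" "y \<in> vsum2_carrier"
  then have p: "p \<noteq> Orderings.top" and v: "inU v" by (auto simp: carrier_iff)
  have vb: "v \<noteq> Orderings.bot" using v inU_nb by blast
  show ?thesis
  proof (cases "p \<le> ell v")
    case True
    then show ?thesis using xy p v by (auto simp: carrier_iff le_LR ball_sum)
  next
    case False
    have inw: "inU (sup v (sup a1 a2))" by (rule inU_both) (simp_all add: le_supI2)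
    have "\<forall>z\<in>vsum2_carrier. vsum2_le f x z \<and> vsum2_le f y z \<longrightarrow> vsum2_le f (J x y) z"
    proof (intro ballI impI)
      fix z assume z: "z \<in> vsum2_carrier" "vsum2_le f x z \<and> vsum2_le f y z"
      show "vsum2_le f (J x y) z"
      proof (cases z)
        case (Inl w) then show ?thesis using z xy by auto
      next
        case (Inr w)
        then have "p \<le> ell w" "v \<le> w" "inU w" using z xy p by (auto simp: carrier_iff le_LR)
        moreover have "ell w = Orderings.top"
          using ell_eq[OF vb \<open>v \<le> w\<close>] \<open>p \<le> ell w\<close> False by metis
        ultimately show ?thesis using xy False Inr by (auto simp: ell_top)
      qed
    qed
    then show ?thesis using xy False p v inw by (auto simp: carrier_iff le_LR ell_big)
  qed
next
  fix v w assume xy: "x = Inr v" "y = Inr w" and c: "x \<in> vsum2_carrier" "y \<in> vsum2_carrier"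
  then have v: "inU v" and w: "inU w" by (auto simp: carrier_iff)
  have "inU (sup v w)" using inU_up[OF v] by simp
  then show ?thesis using xy by (auto simp: carrier_iff le_LR ball_sum)
qed

lemma M_glb: "x \<in> vsum2_carrier \<Longrightarrow> y \<in> vsum2_carrier \<Longrightarrow> M x y \<in> vsum2_carrier \<and>
   vsum2_le f (M x y) x \<and> vsum2_le f (M x y) y \<and>
   (\<forall>z\<in>vsum2_carrier. vsum2_le f z x \<and> vsum2_le f z y \<longrightarrow> vsum2_le f z (M x y))"
proof (cases x; cases y)
  fix p q assume xy: "x = Inl p" "y = Inl q" and c: "x \<in> vsum2_carrier" "y \<in> vsum2_carrier"
  then have p: "p \<noteq> Orderings.top" and q: "q \<noteq> Orderings.top" by (auto simp: carrier_iff)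
  have "inf p q \<noteq> Orderings.top" using p by (metis inf.cobounded1 top_unique)
  then show ?thesis using xy p q by (auto simp: carrier_iff le_LR ball_sum)
next
  fix p v assume xy: "x = Inl p" "y = Inr v" and c: "x \<in> vsum2_carrier" "y \<in> vsum2_carrier"
  then have p: "p \<noteq> Orderings.top" and v: "inU v" by (auto simp: carrier_iff)
  have "inf p (ell v) \<noteq> Orderings.top" using p by (metis inf.cobounded1 top_unique)
  then show ?thesis using xy p v by (auto simp: carrier_iff le_LR ball_sum)
next
  fix v p assume xy: "x = Inr v" "y = Inl p" and c: "x \<in> vsum2_carrier" "y \<in> vsum2_carrier"
  then have p: "p \<noteq> Orderings.top" and v: "inU v" by (auto simp: carrier_iff)
  have "inf p (ell v) \<noteq> Orderings.top" using p by (metis inf.cobounded1 top_unique)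
  then show ?thesis using xy p v by (auto simp: carrier_iff le_LR ball_sum)
next
  fix v w assume xy: "x = Inr v" "y = Inr w" and c: "x \<in> vsum2_carrier" "y \<in> vsum2_carrier"
  then have v: "inU v" and w: "inU w" by (auto simp: carrier_iff)
  show ?thesis
  proof (cases "inU (inf v w)")
    case True
    have e: "ell (inf v w) = inf (ell v) (ell w)" using True inU_nb ell_inf by blast
    show ?thesis using xy v w True by (auto simp: carrier_iff le_LR ball_sum e)
  next
    case False
    have nt: "inf (ell v) (ell w) \<noteq> Orderings.top"
    proof
      assume "inf (ell v) (ell w) = Orderings.top"
      then have "ell v = Orderings.top" "ell w = Orderings.top" by (simp_all add: inf_eq_top_iff)
      then have "inU (inf v w)" by (intro inU_both) (simp_all add: ell_top)
      then show False using False by simp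
    qed
    have nu: "\<not> inU u" if "u \<le> inf v w" for u using False inU_up that by blast
    show ?thesis using xy v w False nt nu by (auto simp: carrier_iff le_LR ball_sum)
  qed
qed

lemma lat: "lattice (vsum2 f)"
  and join_eq: "x \<in> vsum2_carrier \<Longrightarrow> y \<in> vsum2_carrier \<Longrightarrow> join (vsum2 f) x y = J x y"
  and meet_eq: "x \<in> vsum2_carrier \<Longrightarrow> y \<in> vsum2_carrier \<Longrightarrow> meet (vsum2 f) x y = M x y"
  using lattice_from_ops[of "vsum2 f" J M, OF po] J_lub M_glb by (simp_all add: vsum2_def)

lemma a12_inf: "inU t \<Longrightarrow> \<not> (a1 \<le> t \<and> a2 \<le> t) \<Longrightarrow> \<not> inU (inf (sup a1 a2) t)"
proof -
  assume t: "inU t" and n: "\<not> (a1 \<le> t \<and> a2 \<le> t)"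
  have "a1 \<le> t \<or> a2 \<le> t" using above_atom t inU_nb by blast
  then show ?thesis
  proof
    assume "a1 \<le> t"
    then have "\<not> a2 \<le> t" using n by blast
    have "sup a1 (inf a2 t) = inf (sup a1 a2) t" using modU[OF \<open>a1 \<le> t\<close>] .
    then have "inf (sup a1 a2) t = a1" using atom_meet2[OF \<open>\<not> a2 \<le> t\<close>] by simp
    then show ?thesis unfolding inU_def by simp
  next
    assume "a2 \<le> t"
    then have "\<not> a1 \<le> t" using n by blast
    have "sup a2 (inf a1 t) = inf (sup a2 a1) t" using modU[OF \<open>a2 \<le> t\<close>] .
    then have "inf (sup a1 a2) t = a2" using atom_meet1[OF \<open>\<not> a1 \<le> t\<close>] by (simp add: sup_commute)
    then show ?thesis unfolding inU_def by simp
  qed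
qed

lemma modA: "p \<noteq> Orderings.top \<Longrightarrow> q \<noteq> Orderings.top \<Longrightarrow> r \<noteq> Orderings.top \<Longrightarrow> p \<le> r \<Longrightarrow>
  J (Inl p) (M (Inl q) (Inl r)) = M (J (Inl p) (Inl q)) (Inl r)"
proof -
  assume p: "p \<noteq> Orderings.top" and q: "q \<noteq> Orderings.top" and r: "r \<noteq> Orderings.top" and pr: "p \<le> r"
  have e: "sup p (inf q r) = inf (sup p q) r" using modL[OF pr] .
  have nt: "sup p (inf q r) \<noteq> Orderings.top" using pr r by (metis inf.cobounded2 le_sup_iff top_unique)
  show ?thesis using e nt by (auto simp: ell_a12)
qed

lemma modB: "p \<noteq> Orderings.top \<Longrightarrow> inU v \<Longrightarrow> r \<noteq> Orderings.top \<Longrightarrow> p \<le> r \<Longrightarrow>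
  J (Inl p) (M (Inr v) (Inl r)) = M (J (Inl p) (Inr v)) (Inl r)"
proof -
  assume p: "p \<noteq> Orderings.top" and v: "inU v" and r: "r \<noteq> Orderings.top" and pr: "p \<le> r"
  have e: "sup p (inf (ell v) r) = inf (sup p (ell v)) r" using modL[OF pr] .
  have nt: "sup p (inf r (ell v)) \<noteq> Orderings.top" using pr r by (metis inf.cobounded1 le_sup_iff top_unique)
  show ?thesis
  proof (cases "p \<le> ell v")
    case True
    then have "sup p (inf r (ell v)) = inf r (ell v)" using pr by (simp add: sup_absorb2)
    then show ?thesis using True nt by simp
  next
    case False
    then have "sup p (inf r (ell v)) = r" using e coat_join_ell[OF False] by (simp add: inf_commute)
    then show ?thesis using False nt by (simp add: ell_big)
  qed
qed

lemma modC: "p \<noteq> Orderings.top \<Longrightarrow> q \<noteq> Orderings.top \<Longrightarrow> inU t \<Longrightarrow> p \<le> ell t \<Longrightarrow>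
  J (Inl p) (M (Inl q) (Inr t)) = M (J (Inl p) (Inl q)) (Inr t)"
proof -
  assume p: "p \<noteq> Orderings.top" and q: "q \<noteq> Orderings.top" and t: "inU t" and pt: "p \<le> ell t"
  have e: "sup p (inf q (ell t)) = inf (sup p q) (ell t)" using modL[OF pt] .
  show ?thesis
  proof (cases "sup p q = Orderings.top")
    case True
    then have e2: "sup p (inf q (ell t)) = ell t" using e by simp
    show ?thesis
    proof (cases "ell t = Orderings.top")
      case True2: True
      then have "a1 \<le> t" "a2 \<le> t" by (simp_all add: ell_top)
      then have "inf (sup a1 a2) t = sup a1 a2" by (simp add: inf_absorb1)
      then show ?thesis using True True2 e2 inU_a12 by simp
    next
      case False2: False
      then have "\<not> inU (inf (sup a1 a2) t)" using a12_inf t by (simp add: ell_top)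
      then show ?thesis using True False2 e2 by (simp add: ell_a12)
    qed
  next
    case False
    have "inf (sup p q) (ell t) \<noteq> Orderings.top" using False by (metis inf.cobounded1 top_unique)
    then show ?thesis using False e by simp
  qed
qed

lemma ell_c1: "y \<noteq> Orderings.bot \<Longrightarrow> a1 \<le> y \<Longrightarrow> \<not> a2 \<le> y \<Longrightarrow> ell y = c1"
  by (simp add: ell_simps)

lemma ell_c2: "y \<noteq> Orderings.bot \<Longrightarrow> a2 \<le> y \<Longrightarrow> \<not> a1 \<le> y \<Longrightarrow> ell y = c2"
  by (simp add: ell_simps)

lemma modD1: "p \<noteq> Orderings.top \<Longrightarrow> inU v \<Longrightarrow> inU t \<Longrightarrow> p \<le> ell t \<Longrightarrow> \<not> p \<le> ell v \<Longrightarrow>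
  a1 \<le> v \<Longrightarrow> \<not> a2 \<le> v \<Longrightarrow>
  J (Inl p) (M (Inr v) (Inr t)) = M (J (Inl p) (Inr v)) (Inr t)"
proof -
  assume p: "p \<noteq> Orderings.top" and v: "inU v" and t: "inU t" and pt: "p \<le> ell t"
    and pv: "\<not> p \<le> ell v" and a1v: "a1 \<le> v" and a2v: "\<not> a2 \<le> v"
  have vb: "v \<noteq> Orderings.bot" and tb: "t \<noteq> Orderings.bot" using v t inU_nb by auto
  have ev: "ell v = c1" using ell_c1[OF vb a1v a2v] .
  have a2t: "a2 \<le> t"
  proof (rule ccontr)
    assume n: "\<not> a2 \<le> t"
    then have "a1 \<le> t" using above_atom[OF tb] by blast
    then have "ell t = c1" using ell_c1[OF tb _ n] by blast
    then show False using pt pv ev by simp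
  qed
  have s1: "sup v a12 = sup a2 v" using a1v by (metis sup.absorb1 sup.assoc sup.commute)
  have key: "inf (sup v a12) t = sup a2 (inf v t)" using modU[OF a2t, of v] s1 by simp
  have rhs1: "J (Inl p) (Inr v) = Inr (sup v a12)" using pv by simp
  show ?thesis
  proof (cases "inU (inf v t)")
    case True
    have ib: "inf v t \<noteq> Orderings.bot" using True inU_nb by blast
    have a1vt: "a1 \<le> inf v t" using above_atom[OF ib] a2v by auto
    have "ell (inf v t) = inf c1 (ell t)" using ell_inf[OF ib] ev by simp
    then have npl: "\<not> p \<le> ell (inf v t)" using pv ev by (metis inf.boundedE)
    have s2: "sup (inf v t) a12 = sup a2 (inf v t)" using a1vt by (metis sup.absorb1 sup.assoc sup.commute)
    have "inU (sup a2 (inf v t))" using inU_up[OF True] by simp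
    then show ?thesis using True rhs1 key npl s2 by simp
  next
    case False
    show ?thesis
    proof (cases "a1 \<le> t")
      case True
      have "a1 \<le> inf v t" using True a1v by simp
      then have vt: "inf v t = a1" using False inU_ge1 by blast
      have et: "ell t = Orderings.top" using ell_simps(1) True a2t by blast
      have "sup p c1 = Orderings.top" using pv ev coat_join1 by simp
      moreover have "sup a2 a1 = a12" by (simp add: sup_commute)
      ultimately show ?thesis using False rhs1 key vt et ev inU_a12 by simp
    next
      case False2: False
      have et: "ell t = c2" using ell_c2[OF tb a2t False2] .
      have vt: "inf v t = Orderings.bot"
      proof (rule ccontr)
        assume "inf v t \<noteq> Orderings.bot"
        then have "a1 \<le> inf v t \<or> a2 \<le> inf v t" using above_atom by blast
        then show False using False2 a2v by simp
      qed
      have "sup p (inf c1 c2) = inf (sup p c1) c2" using modL pt et by simp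
      then have e2: "sup p (inf c1 c2) = c2" using pv ev coat_join1 by simp
      have "\<not> inU a2" unfolding inU_def by simp
      then show ?thesis using False rhs1 key vt et ev e2 ci ell_big by simp
    qed
  qed
qed

lemma modD2: "p \<noteq> Orderings.top \<Longrightarrow> inU v \<Longrightarrow> inU t \<Longrightarrow> p \<le> ell t \<Longrightarrow> \<not> p \<le> ell v \<Longrightarrow>
  a2 \<le> v \<Longrightarrow> \<not> a1 \<le> v \<Longrightarrow>
  J (Inl p) (M (Inr v) (Inr t)) = M (J (Inl p) (Inr v)) (Inr t)"
proof -
  assume p: "p \<noteq> Orderings.top" and v: "inU v" and t: "inU t" and pt: "p \<le> ell t"
    and pv: "\<not> p \<le> ell v" and a2v: "a2 \<le> v" and a1v: "\<not> a1 \<le> v"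
  have vb: "v \<noteq> Orderings.bot" and tb: "t \<noteq> Orderings.bot" using v t inU_nb by auto
  have ev: "ell v = c2" using ell_c2[OF vb a2v a1v] .
  have a1t: "a1 \<le> t"
  proof (rule ccontr)
    assume n: "\<not> a1 \<le> t"
    then have "a2 \<le> t" using above_atom[OF tb] by blast
    then have "ell t = c2" using ell_c2[OF tb _ n] by blast
    then show False using pt pv ev by simp
  qed
  have s1: "sup v a12 = sup a1 v" using a2v by (metis sup.absorb1 sup.assoc sup.commute)
  have key: "inf (sup v a12) t = sup a1 (inf v t)" using modU[OF a1t, of v] s1 by simp
  have rhs1: "J (Inl p) (Inr v) = Inr (sup v a12)" using pv by simp
  show ?thesis
  proof (cases "inU (inf v t)")
    case True
    have ib: "inf v t \<noteq> Orderings.bot" using True inU_nb by blast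
    have a2vt: "a2 \<le> inf v t" using above_atom[OF ib] a1v by auto
    have "ell (inf v t) = inf c2 (ell t)" using ell_inf[OF ib] ev by simp
    then have npl: "\<not> p \<le> ell (inf v t)" using pv ev by (metis inf.boundedE)
    have s2: "sup (inf v t) a12 = sup a1 (inf v t)" using a2vt by (metis sup.absorb1 sup.assoc sup.commute)
    have "inU (sup a1 (inf v t))" using inU_up[OF True] by simp
    then show ?thesis using True rhs1 key npl s2 by simp
  next
    case False
    show ?thesis
    proof (cases "a2 \<le> t")
      case True
      have "a2 \<le> inf v t" using True a2v by simp
      then have vt: "inf v t = a2" using False inU_ge2 by blast
      have et: "ell t = Orderings.top" using ell_simps(1) True a1t by blast
      have "sup p c2 = Orderings.top" using pv ev coat_join2 by simp
      moreover have "sup a1 a2 = a12" by (simp add: sup_commute)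
      ultimately show ?thesis using False rhs1 key vt et ev inU_a12 by simp
    next
      case False2: False
      have et: "ell t = c1" using ell_c1[OF tb a1t False2] .
      have vt: "inf v t = Orderings.bot"
      proof (rule ccontr)
        assume "inf v t \<noteq> Orderings.bot"
        then have "a2 \<le> inf v t \<or> a1 \<le> inf v t" using above_atom by blast
        then show False using False2 a1v by simp
      qed
      have "sup p (inf c2 c1) = inf (sup p c2) c1" using modL pt et by simp
      then have e2: "sup p (inf c2 c1) = c1" using pv ev coat_join2 by simp
      have "\<not> inU a1" unfolding inU_def by simp
      then show ?thesis using False rhs1 key vt et ev e2 ci ell_big by simp
    qed
  qed
qed

lemma modE1: "inU s \<Longrightarrow> q \<noteq> Orderings.top \<Longrightarrow> inU t \<Longrightarrow> s \<le> t \<Longrightarrow> \<not> q \<le> ell s \<Longrightarrow>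
  a1 \<le> s \<Longrightarrow> \<not> a2 \<le> s \<Longrightarrow>
  J (Inr s) (M (Inl q) (Inr t)) = M (J (Inr s) (Inl q)) (Inr t)"
proof -
  assume s: "inU s" and q: "q \<noteq> Orderings.top" and t: "inU t" and st: "s \<le> t"
    and qs: "\<not> q \<le> ell s" and a1s: "a1 \<le> s" and a2s: "\<not> a2 \<le> s"
  have sb: "s \<noteq> Orderings.bot" and tb: "t \<noteq> Orderings.bot" using s t inU_nb by auto
  have es: "ell s = c1" using ell_c1[OF sb a1s a2s] .
  have a1t: "a1 \<le> t" using a1s st by (rule order_trans)
  have s12: "sup s a12 = sup s a2" using a1s by (metis sup.absorb1 sup.assoc)
  have rhs1: "J (Inr s) (Inl q) = Inr (sup s a12)" using qs by simp
  show ?thesis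
  proof (cases "a2 \<le> t")
    case True
    have et: "ell t = Orderings.top" using ell_simps(1) a1t True by blast
    have le: "sup s a12 \<le> t" using st a1t True by simp
    then have "inf (sup s a12) t = sup s a12" by (simp add: inf_absorb1)
    moreover have "inU (sup s a12)" using inU_up[OF s] by simp
    ultimately show ?thesis using rhs1 et qs es by simp
  next
    case False
    have et: "ell t = c1" using ell_c1[OF tb a1t False] .
    have "sup s (inf a2 t) = inf (sup s a2) t" using modU[OF st] .
    then have "inf (sup s a12) t = s" using s12 atom_meet2[OF False] by simp
    then show ?thesis using rhs1 et es s by simp
  qed
qed

lemma modE2: "inU s \<Longrightarrow> q \<noteq> Orderings.top \<Longrightarrow> inU t \<Longrightarrow> s \<le> t \<Longrightarrow> \<not> q \<le> ell s \<Longrightarrow>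
  a2 \<le> s \<Longrightarrow> \<not> a1 \<le> s \<Longrightarrow>
  J (Inr s) (M (Inl q) (Inr t)) = M (J (Inr s) (Inl q)) (Inr t)"
proof -
  assume s: "inU s" and q: "q \<noteq> Orderings.top" and t: "inU t" and st: "s \<le> t"
    and qs: "\<not> q \<le> ell s" and a2s: "a2 \<le> s" and a1s: "\<not> a1 \<le> s"
  have sb: "s \<noteq> Orderings.bot" and tb: "t \<noteq> Orderings.bot" using s t inU_nb by auto
  have es: "ell s = c2" using ell_c2[OF sb a2s a1s] .
  have a2t: "a2 \<le> t" using a2s st by (rule order_trans)
  have s12: "sup s a12 = sup s a1" using a2s by (metis sup.absorb1 sup.assoc sup.commute)
  have rhs1: "J (Inr s) (Inl q) = Inr (sup s a12)" using qs by simp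
  show ?thesis
  proof (cases "a1 \<le> t")
    case True
    have et: "ell t = Orderings.top" using ell_simps(1) a2t True by blast
    have le: "sup s a12 \<le> t" using st a2t True by simp
    then have "inf (sup s a12) t = sup s a12" by (simp add: inf_absorb1)
    moreover have "inU (sup s a12)" using inU_up[OF s] by simp
    ultimately show ?thesis using rhs1 et qs es by simp
  next
    case False
    have et: "ell t = c2" using ell_c2[OF tb a2t False] .
    have "sup s (inf a1 t) = inf (sup s a1) t" using modU[OF st] .
    then have "inf (sup s a12) t = s" using s12 atom_meet1[OF False] by simp
    then show ?thesis using rhs1 et es s by simp
  qed
qed

lemma one_atom: "v \<noteq> Orderings.bot \<Longrightarrow> ell v \<noteq> Orderings.top \<Longrightarrow>
   (a1 \<le> v \<and> \<not> a2 \<le> v) \<or> (a2 \<le> v \<and> \<not> a1 \<le> v)"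
  using above_atom ell_top by blast

lemma modD: "p \<noteq> Orderings.top \<Longrightarrow> inU v \<Longrightarrow> inU t \<Longrightarrow> p \<le> ell t \<Longrightarrow>
  J (Inl p) (M (Inr v) (Inr t)) = M (J (Inl p) (Inr v)) (Inr t)"
proof -
  assume p: "p \<noteq> Orderings.top" and v: "inU v" and t: "inU t" and pt: "p \<le> ell t"
  have vb: "v \<noteq> Orderings.bot" using v inU_nb by auto
  show ?thesis
  proof (cases "p \<le> ell v")
    case True
    show ?thesis
    proof (cases "inU (inf v t)")
      case True2: True
      have "ell (inf v t) = inf (ell v) (ell t)" using ell_inf True2 inU_nb by blast
      then have "p \<le> ell (inf v t)" using True pt by simp
      then show ?thesis using True True2 by simp
    next
      case False
      have nt: "inf (ell v) (ell t) \<noteq> Orderings.top"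
      proof
        assume "inf (ell v) (ell t) = Orderings.top"
        then have "ell v = Orderings.top" "ell t = Orderings.top" by (simp_all add: inf_eq_top_iff)
        then have "inU (inf v t)" by (intro inU_both) (simp_all add: ell_top)
        then show False using False by simp
      qed
      have "sup p (inf (ell v) (ell t)) = inf (ell v) (ell t)" using True pt by (simp add: sup_absorb2)
      then show ?thesis using True False nt by simp
    qed
  next
    case False
    have "ell v \<noteq> Orderings.top" using False by auto
    then have "(a1 \<le> v \<and> \<not> a2 \<le> v) \<or> (a2 \<le> v \<and> \<not> a1 \<le> v)" using one_atom vb by blast
    then show ?thesis using modD1[OF p v t pt False] modD2[OF p v t pt False] by blast
  qed
qed

lemma modE: "inU s \<Longrightarrow> q \<noteq> Orderings.top \<Longrightarrow> inU t \<Longrightarrow> s \<le> t \<Longrightarrow>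
  J (Inr s) (M (Inl q) (Inr t)) = M (J (Inr s) (Inl q)) (Inr t)"
proof -
  assume s: "inU s" and q: "q \<noteq> Orderings.top" and t: "inU t" and st: "s \<le> t"
  have sb: "s \<noteq> Orderings.bot" using s inU_nb by auto
  show ?thesis
  proof (cases "q \<le> ell s")
    case True
    have "inf q (ell t) \<le> ell s" using True by (meson inf.coboundedI1)
    moreover have "inf s t = s" using st by (simp add: inf_absorb1)
    ultimately show ?thesis using True s by simp
  next
    case False
    have "ell s \<noteq> Orderings.top" using False by auto
    then have "(a1 \<le> s \<and> \<not> a2 \<le> s) \<or> (a2 \<le> s \<and> \<not> a1 \<le> s)" using one_atom sb by blast
    then show ?thesis using modE1[OF s q t st False] modE2[OF s q t st False] by blast
  qed
qed

lemma sup_a12_1: "a1 \<le> s \<Longrightarrow> sup s a12 = sup s a2"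
  by (metis sup.absorb1 sup.assoc)

lemma sup_a12_2: "a2 \<le> s \<Longrightarrow> sup s a12 = sup s a1"
  by (metis sup.absorb1 sup.assoc sup.commute)

lemma Fcore: "inU s \<Longrightarrow> inU v \<Longrightarrow> inU t \<Longrightarrow> s \<le> t \<Longrightarrow> \<not> inU (inf v t) \<Longrightarrow>
  (if inf (ell v) (ell t) \<le> ell s then s else sup s a12) = sup s (inf v t)"
proof -
  assume s: "inU s" and v: "inU v" and t: "inU t" and st: "s \<le> t" and w: "\<not> inU (inf v t)"
  have sb: "s \<noteq> Orderings.bot" and vb: "v \<noteq> Orderings.bot" and tb: "t \<noteq> Orderings.bot"
    using s v t inU_nb by auto
  have w3: "inf v t = Orderings.bot \<or> inf v t = a1 \<or> inf v t = a2" using w unfolding inU_def by blast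
  have tr1: "a1 \<le> s \<Longrightarrow> a1 \<le> t" and tr2: "a2 \<le> s \<Longrightarrow> a2 \<le> t" using st order_trans by blast+
  have nb1: "\<not> a1 \<le> Orderings.bot" and nb2: "\<not> a2 \<le> Orderings.bot" using ai by (auto simp: bot_unique)
  note A = above_atom[OF sb] above_atom[OF vb] above_atom[OF tb]
  have f1: "inf v t = Orderings.bot \<Longrightarrow> \<not> (a1 \<le> v \<and> a1 \<le> t) \<and> \<not> (a2 \<le> v \<and> a2 \<le> t)"
    using nb1 nb2 by (metis le_inf_iff)
  have f2: "inf v t = a1 \<Longrightarrow> a1 \<le> v \<and> a1 \<le> t \<and> \<not> (a2 \<le> v \<and> a2 \<le> t)"
    using a_incomp by (metis le_inf_iff order_refl)
  have f3: "inf v t = a2 \<Longrightarrow> a2 \<le> v \<and> a2 \<le> t \<and> \<not> (a1 \<le> v \<and> a1 \<le> t)"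
    using a_incomp by (metis le_inf_iff order_refl)
  show ?thesis
    using w3 A f1 f2 f3 tr1 tr2 nb1 nb2 a_incomp c_incomp
    by (cases "a1 \<le> s"; cases "a2 \<le> s"; cases "a1 \<le> v"; cases "a2 \<le> v"; cases "a1 \<le> t"; cases "a2 \<le> t")
       (auto simp: ell_simps sup_a12_1 sup_a12_2 sup.absorb1 inf.absorb1 inf.absorb2)
qed

lemma modF: "inU s \<Longrightarrow> inU v \<Longrightarrow> inU t \<Longrightarrow> s \<le> t \<Longrightarrow>
  J (Inr s) (M (Inr v) (Inr t)) = M (J (Inr s) (Inr v)) (Inr t)"
proof -
  assume s: "inU s" and v: "inU v" and t: "inU t" and st: "s \<le> t"
  have e: "inf (sup s v) t = sup s (inf v t)" using modU[OF st, of v] by simp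
  have u: "inU (sup s (inf v t))" using inU_up[OF s] by simp
  show ?thesis
  proof (cases "inU (inf v t)")
    case True
    then show ?thesis using e u by simp
  next
    case False
    have "J (Inr s) (Inl (inf (ell v) (ell t))) = Inr (sup s (inf v t))"
      using Fcore[OF s v t st False] by (simp split: if_splits)
    then show ?thesis using e u False by simp
  qed
qed

lemma modJM: "x \<in> vsum2_carrier \<Longrightarrow> y \<in> vsum2_carrier \<Longrightarrow> z \<in> vsum2_carrier \<Longrightarrow>
    vsum2_le f x z \<Longrightarrow> J x (M y z) = M (J x y) z"
proof (cases x; cases y; cases z)
  fix p q r assume "x = Inl p" "y = Inl q" "z = Inl r" "x \<in> vsum2_carrier" "y \<in> vsum2_carrier"
    "z \<in> vsum2_carrier" "vsum2_le f x z"
  then show ?thesis using modA by (simp add: carrier_iff)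
next
  fix p q t assume "x = Inl p" "y = Inl q" "z = Inr t" "x \<in> vsum2_carrier" "y \<in> vsum2_carrier"
    "z \<in> vsum2_carrier" "vsum2_le f x z"
  then show ?thesis using modC by (simp add: carrier_iff le_LR)
next
  fix p v r assume "x = Inl p" "y = Inr v" "z = Inl r" "x \<in> vsum2_carrier" "y \<in> vsum2_carrier"
    "z \<in> vsum2_carrier" "vsum2_le f x z"
  then show ?thesis using modB by (simp add: carrier_iff)
next
  fix p v t assume "x = Inl p" "y = Inr v" "z = Inr t" "x \<in> vsum2_carrier" "y \<in> vsum2_carrier"
    "z \<in> vsum2_carrier" "vsum2_le f x z"
  then show ?thesis using modD by (simp add: carrier_iff le_LR)
next
  fix s q r assume "x = Inr s" "y = Inl q" "z = Inl r" "vsum2_le f x z"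
  then show ?thesis by simp
next
  fix s q t assume "x = Inr s" "y = Inl q" "z = Inr t" "x \<in> vsum2_carrier" "y \<in> vsum2_carrier"
    "z \<in> vsum2_carrier" "vsum2_le f x z"
  then show ?thesis using modE by (simp add: carrier_iff)
next
  fix s v r assume "x = Inr s" "y = Inr v" "z = Inl r" "vsum2_le f x z"
  then show ?thesis by simp
next
  fix s v t assume "x = Inr s" "y = Inr v" "z = Inr t" "x \<in> vsum2_carrier" "y \<in> vsum2_carrier"
    "z \<in> vsum2_carrier" "vsum2_le f x z"
  then show ?thesis using modF by (simp add: carrier_iff)
qed

lemma modular: "modular_lattice (vsum2 f)"
  unfolding modular_lattice_def
proof (intro conjI ballI impI)
  show "lattice (vsum2 f)" by (rule lat)
  fix x y z assume c: "x \<in> carrier (vsum2 f)" "y \<in> carrier (vsum2 f)" "z \<in> carrier (vsum2 f)"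
    and le: "x \<sqsubseteq>\<^bsub>vsum2 f\<^esub> z"
  have c': "x \<in> vsum2_carrier" "y \<in> vsum2_carrier" "z \<in> vsum2_carrier" "vsum2_le f x z"
    using c le by (simp_all add: vsum2_def)
  have "M y z \<in> vsum2_carrier" "J x y \<in> vsum2_carrier" using M_glb J_lub c' by blast+
  then show "x \<squnion>\<^bsub>vsum2 f\<^esub> (y \<sqinter>\<^bsub>vsum2 f\<^esub> z) = (x \<squnion>\<^bsub>vsum2 f\<^esub> y) \<sqinter>\<^bsub>vsum2 f\<^esub> z"
    using c' by (simp add: join_eq meet_eq modJM)
qed

end

theorem lemma3p6:
  fixes f :: "'a::{finite, bounded_lattice} \<Rightarrow> 'b::{finite, bounded_lattice}"
  assumes "is_modular TYPE('a)"
    and "is_modular TYPE('b)"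
    and "card (coatoms :: 'a set) = 2"
    and "card (atoms :: 'b set) = 2"
    and "bij_betw f coatoms atoms"
  shows "modular_lattice (vsum2 f)"
proof -
  obtain c1 c2 :: 'a where cc: "c1 \<noteq> c2" "coatoms = {c1, c2}"
    using assms(3) by (metis card_2_iff)
  have at: "(atoms :: 'b set) = {f c1, f c2}"
    using bij_betw_imp_surj_on[OF assms(5)] cc(2) by (metis image_empty image_insert)
  have a12: "f c1 \<noteq> f c2"
    using inj_on_contraD[OF bij_betw_imp_inj_on[OF assms(5)] cc(1)] cc(2) by blast
  interpret V2 f c1 c2
  proof
    show "\<And>x y z :: 'a. x \<le> z \<Longrightarrow> sup x (inf y z) = inf (sup x y) z"
      using assms(1) unfolding is_modular_def by blast
    show "\<And>x y z :: 'b. x \<le> z \<Longrightarrow> sup x (inf y z) = inf (sup x y) z"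
      using assms(2) unfolding is_modular_def by blast
  qed (use cc at a12 in auto)
  show ?thesis by (rule modular)
qed

end
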